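(* Let $G\subseteq \mathrm{GL}_n(\mathbb{C})$ be a closed subgroup with left Haar measure $\mu$, let $\Gamma\subset G$ be a discrete subgroup, and let $\mathcal{F}_\Gamma\subset G$ be a measurable fundamental domain for $\Gamma$ (the translates $u\mathcal{F}_\Gamma$, $u\in\Gamma$, are pairwise disjoint) with $0<\mu(\mathcal{F}_\Gamma)<\infty$ and $R_\Gamma:=\sup_{g\in\mathcal{F}_\Gamma}\|g\|<\infty$. For $x\in G$ and $M>0$ let $B_x(M)=\{g\in G:\|xg\|\le M\}$. Then for all $x\in G$, $a\in M_{m,n}(\mathbb{C})$, $c>0$ and $M>0$, $$\sum_{u\in\Gamma\cap B_x(M)}e^{-c\|au\|^2}\le\frac{1}{\mu(\mathcal{F}_\Gamma)}\int_{B_x(R_\Gamma M)}e^{-\frac{c}{R_\Gamma^2}\|ag\|^2}\,d\mu(g).$$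
   Context: $\|\cdot\|$ denotes the Frobenius norm of a (possibly rectangular) complex matrix. *)

theory Defs
  imports "HOL-Analysis.Analysis"
begin

definition frob_norm :: "complex^'n^'m \<Rightarrow> real" where
  "frob_norm A = sqrt (\<Sum>i\<in>UNIV. \<Sum>j\<in>UNIV. (cmod (A $ i $ j))\<^sup>2)"

definition GL :: "(complex^'n^'n) set" where
  "GL = {A. invertible A}"

definition closed_subgroup_GL :: "(complex^'n^'n) set \<Rightarrow> bool" where
  "closed_subgroup_GL G \<longleftrightarrow>
     G \<subseteq> GL \<and> mat 1 \<in> G \<and>
     (\<forall>x\<in>G. \<forall>y\<in>G. x ** y \<in> G) \<and>
     (\<forall>x\<in>G. matrix_inv x \<in> G) \<and>
     closedin (top_of_set GL) G"

definition left_haar_measure :: "(complex^'n^'n) set \<Rightarrow> (complex^'n^'n) measure \<Rightarrow> bool" where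
  "left_haar_measure G \<mu> \<longleftrightarrow>
     sets \<mu> = sets (restrict_space borel G) \<and>
     (\<forall>x\<in>G. \<forall>A\<in>sets \<mu>. emeasure \<mu> ((\<lambda>g. x ** g) ` A) = emeasure \<mu> A) \<and>
     (\<forall>K. compact K \<and> K \<subseteq> G \<longrightarrow> emeasure \<mu> K < \<infinity>) \<and>
     (\<forall>U. openin (top_of_set G) U \<and> U \<noteq> {} \<longrightarrow> emeasure \<mu> U > 0) \<and>
     (\<forall>A\<in>sets \<mu>. emeasure \<mu> A =
        (INF U\<in>{U. openin (top_of_set G) U \<and> A \<subseteq> U}. emeasure \<mu> U)) \<and>
     (\<forall>U. openin (top_of_set G) U \<longrightarrow>
        emeasure \<mu> U = (SUP K\<in>{K. compact K \<and> K \<subseteq> U}. emeasure \<mu> K))"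

definition discrete_subgroup :: "(complex^'n^'n) set \<Rightarrow> (complex^'n^'n) set \<Rightarrow> bool" where
  "discrete_subgroup \<Gamma> G \<longleftrightarrow>
     \<Gamma> \<subseteq> G \<and> mat 1 \<in> \<Gamma> \<and>
     (\<forall>x\<in>\<Gamma>. \<forall>y\<in>\<Gamma>. x ** y \<in> \<Gamma>) \<and>
     (\<forall>x\<in>\<Gamma>. matrix_inv x \<in> \<Gamma>) \<and>
     (\<forall>u\<in>\<Gamma>. \<exists>e>0. \<forall>v\<in>\<Gamma>. dist u v < e \<longrightarrow> v = u)"

definition measurable_fundamental_domain ::
  "(complex^'n^'n) measure \<Rightarrow> (complex^'n^'n) set \<Rightarrow> (complex^'n^'n) set \<Rightarrow> (complex^'n^'n) set \<Rightarrow> bool" where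
  "measurable_fundamental_domain \<mu> G \<Gamma> F \<longleftrightarrow>
     F \<in> sets \<mu> \<and> F \<subseteq> G \<and>
     (\<forall>u\<in>\<Gamma>. \<forall>v\<in>\<Gamma>. u \<noteq> v \<longrightarrow> ((\<lambda>g. u ** g) ` F) \<inter> ((\<lambda>g. v ** g) ` F) = {}) \<and>
     (\<Union>u\<in>\<Gamma>. (\<lambda>g. u ** g) ` F) = G"

definition Bset :: "(complex^'n^'n) set \<Rightarrow> complex^'n^'n \<Rightarrow> real \<Rightarrow> (complex^'n^'n) set" where
  "Bset G x M = {g\<in>G. frob_norm (x ** g) \<le> M}"

end

theory Submission
  imports Defs
begin

lemma nn_integral_count_space_le:
  fixes f :: "'a \<Rightarrow> ennreal"
  assumes Bd: "\<And>S. finite S \<Longrightarrow> S \<subseteq> A \<Longrightarrow> sum f S \<le> B"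
  shows "(\<integral>\<^sup>+x. f x \<partial>count_space A) \<le> B"
proof (cases "B = top")
  case True thus ?thesis by simp
next
  case Bfin: False
  show ?thesis
    unfolding nn_integral_def
  proof (rule Sup_least, clarify)
    fix g assume sg: "simple_function (count_space A) g" and gf: "g \<le> f"
    have fin: "finite (g ` A)" using sg by simp
    show "integral\<^sup>S (count_space A) g \<le> B"
    proof (cases "finite {a\<in>A. 0 < g a}")
      case True
      have "integral\<^sup>S (count_space A) g = integral\<^sup>N (count_space A) g"
        using nn_integral_eq_simple_integral[OF sg] by simp
      also have "\<dots> = (\<Sum>a|a\<in>A \<and> 0<g a. g a)" by (rule nn_integral_count_space[OF True])
      also have "\<dots> \<le> (\<Sum>a|a\<in>A \<and> 0<g a. f a)"
        by (rule sum_mono) (use gf in \<open>auto simp: le_fun_def\<close>)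
      also have "\<dots> \<le> B" by (rule Bd) (use True in auto)
      finally show ?thesis .
    next
      case False
      define P where "P = {a\<in>A. 0 < g a}"
      have Pinf: "infinite P" using False P_def by simp
      hence Pne: "g ` P \<noteq> {}" by auto
      have finP: "finite (g ` P)" using fin P_def by (auto intro: finite_subset)
      define m where "m = Min (g ` P)"
      have m_pos: "0 < m" using Min_in[OF finP Pne] P_def m_def by auto
      have m_le: "\<And>a. a\<in>P \<Longrightarrow> m \<le> g a" using Min_le finP m_def by auto
      obtain b where b: "B = ennreal b" "0 \<le> b" using Bfin by (cases B) auto
      define r where "r = enn2real (min m 1)"
      have rpos: "0 < r" using m_pos by (simp add: r_def enn2real_positive_iff min_less_iff_disj)
      have rm: "ennreal r \<le> m" unfolding r_def
        by (metis ennreal_enn2real min.cobounded1 min.cobounded2 order.strict_trans1 ennreal_less_top ennreal_one_less_top top.not_eq_extremum)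
      obtain n :: nat where n: "b < real n * r" using ex_less_of_nat_mult[OF rpos] by auto
      obtain S where S: "finite S" "card S = n" "S \<subseteq> P" using infinite_arbitrarily_large[OF Pinf] by blast
      have "ennreal (real n * r) = (\<Sum>a\<in>S. ennreal r)"
        using S rpos by (simp add: ennreal_mult less_imp_le ennreal_of_nat_eq_real_of_nat)
      also have "\<dots> \<le> (\<Sum>a\<in>S. f a)"
      proof (rule sum_mono)
        fix a assume "a \<in> S"
        hence "a \<in> P" using S by auto
        hence "ennreal r \<le> g a" using rm m_le order_trans by blast
        also have "g a \<le> f a" using gf by (simp add: le_fun_def)
        finally show "ennreal r \<le> f a" .
      qed
      also have "\<dots> \<le> B" using S P_def by (intro Bd) auto
      finally have "real n * r \<le> b" using b by (simp add: ennreal_le_iff)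
      with n show ?thesis by simp
    qed
  qed
qed

lemma frob_nonneg: "0 \<le> frob_norm A"
  by (simp add: frob_norm_def sum_nonneg)

lemma frob_norm_mult:
  fixes A :: "complex^'k^'m" and B :: "complex^'n^'k"
  shows "frob_norm (A ** B) \<le> frob_norm A * frob_norm B"
proof -
  have ent: "(cmod ((A**B)$i$j))\<^sup>2 \<le> (\<Sum>k\<in>UNIV. (cmod (A$i$k))\<^sup>2) * (\<Sum>k\<in>UNIV. (cmod (B$k$j))\<^sup>2)" for i j
  proof -
    have "cmod ((A**B)$i$j) \<le> (\<Sum>k\<in>UNIV. cmod (A$i$k) * cmod (B$k$j))"
      unfolding matrix_matrix_mult_def
      by (simp add: order_trans[OF norm_sum] norm_mult)
    hence "(cmod ((A**B)$i$j))\<^sup>2 \<le> (\<Sum>k\<in>UNIV. cmod (A$i$k) * cmod (B$k$j))\<^sup>2"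
      by (rule power_mono) simp
    also have "\<dots> \<le> (\<Sum>k\<in>UNIV. (cmod (A$i$k))\<^sup>2) * (\<Sum>k\<in>UNIV. (cmod (B$k$j))\<^sup>2)"
      by (rule Cauchy_Schwarz_ineq_sum)
    finally show ?thesis .
  qed
  have "(\<Sum>i\<in>UNIV. \<Sum>j\<in>UNIV. (cmod ((A**B)$i$j))\<^sup>2)
      \<le> (\<Sum>i\<in>UNIV. \<Sum>j\<in>UNIV. (\<Sum>k\<in>UNIV. (cmod (A$i$k))\<^sup>2) * (\<Sum>k\<in>UNIV. (cmod (B$k$j))\<^sup>2))"
    by (intro sum_mono ent)
  also have "\<dots> = (\<Sum>i\<in>UNIV. \<Sum>k\<in>UNIV. (cmod (A$i$k))\<^sup>2) * (\<Sum>j\<in>UNIV. \<Sum>k\<in>UNIV. (cmod (B$k$j))\<^sup>2)"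
    by (rule sum_product[symmetric])
  also have "(\<Sum>j\<in>UNIV. \<Sum>k\<in>UNIV. (cmod (B$k$j))\<^sup>2) = (\<Sum>k\<in>UNIV. \<Sum>j\<in>UNIV. (cmod (B$k$j))\<^sup>2)"
    by (rule sum.swap)
  finally have le: "(\<Sum>i\<in>UNIV. \<Sum>j\<in>UNIV. (cmod ((A**B)$i$j))\<^sup>2) \<le> (frob_norm A * frob_norm B)\<^sup>2"
    unfolding frob_norm_def by (simp add: sum_nonneg power_mult_distrib)
  have "frob_norm (A ** B) \<le> sqrt ((frob_norm A * frob_norm B)\<^sup>2)"
    unfolding frob_norm_def[of "A ** B"] using le by (rule real_sqrt_le_mono)
  also have "\<dots> = frob_norm A * frob_norm B" by (simp add: frob_nonneg)
  finally show ?thesis .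
qed

lemma linear_lmult: "linear (\<lambda>h::complex^'n^'k. C ** h)"
  by (simp add: linear_iff vec_eq_iff matrix_matrix_mult_def sum.distrib distrib_left scaleR_sum_right mult_scaleR_right)


lemma lmult_borel: "(\<lambda>h::complex^'n^'k. C ** h) \<in> borel_measurable borel"
proof -
  have "bounded_linear (\<lambda>h::complex^'n^'k. C ** h)"
    using linear_lmult linear_conv_bounded_linear by blast
  hence "continuous_on UNIV (\<lambda>h::complex^'n^'k. C ** h)" by (rule linear_continuous_on)
  thus ?thesis by (rule borel_measurable_continuous_onI)
qed

theorem mainTheorem7:
  fixes G \<Gamma> F :: "(complex^'n^'n) set"
    and \<mu> :: "(complex^'n^'n) measure"
    and x :: "complex^'n^'n"
    and a :: "complex^'n^'m"
    and c M R :: real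
  assumes "closed_subgroup_GL G"
    and "left_haar_measure G \<mu>"
    and "discrete_subgroup \<Gamma> G"
    and "measurable_fundamental_domain \<mu> G \<Gamma> F"
    and "0 < emeasure \<mu> F" and "emeasure \<mu> F < \<infinity>"
    and "bdd_above (frob_norm ` F)"
    and "R = Sup (frob_norm ` F)"
    and "x \<in> G" and "c > 0" and "M > 0"
  shows "(\<integral>\<^sup>+ u. ennreal (exp (- c * (frob_norm (a ** u))\<^sup>2)) \<partial>count_space (\<Gamma> \<inter> Bset G x M))
         \<le> (\<integral>\<^sup>+ g. indicator (Bset G x (R * M)) g
                  * ennreal (exp (- (c / R\<^sup>2) * (frob_norm (a ** g))\<^sup>2)) \<partial>\<mu>)
            / emeasure \<mu> F"
proof -
  note A = assms
  have GGL: "G \<subseteq> GL" and Gmul: "\<And>y z. y \<in> G \<Longrightarrow> z \<in> G \<Longrightarrow> y ** z \<in> G"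
    and Ginv: "\<And>y. y \<in> G \<Longrightarrow> matrix_inv y \<in> G"
    using A(1) unfolding closed_subgroup_GL_def by auto
  have sets_mu: "sets \<mu> = sets (restrict_space borel G)"
    and haar: "\<And>y B. y \<in> G \<Longrightarrow> B \<in> sets \<mu> \<Longrightarrow> emeasure \<mu> ((\<lambda>g. y ** g) ` B) = emeasure \<mu> B"
    using A(2) unfolding left_haar_measure_def by auto
  have GamG: "\<Gamma> \<subseteq> G" using A(3) unfolding discrete_subgroup_def by auto
  have Fmeas: "F \<in> sets \<mu>" and FG: "F \<subseteq> G"
    and disj: "\<And>u v. u \<in> \<Gamma> \<Longrightarrow> v \<in> \<Gamma> \<Longrightarrow> u \<noteq> v \<Longrightarrow> ((\<lambda>g. u ** g) ` F) \<inter> ((\<lambda>g. v ** g) ` F) = {}"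
    using A(4) unfolding measurable_fundamental_domain_def by auto
  have inv: "g ** matrix_inv g = mat 1 \<and> matrix_inv g ** g = mat 1" if "g \<in> G" for g
  proof -
    have "invertible g" using that GGL by (auto simp: GL_def)
    thus ?thesis unfolding invertible_def matrix_inv_def by (rule someI_ex)
  qed
  define T where "T u = (\<lambda>g. u ** g) ` F" for u :: "complex^'n^'n"
  have Tmeas: "T u \<in> sets \<mu>" if uG: "u \<in> G" for u
  proof -
    from Fmeas obtain B where B: "B \<in> sets borel" "F = G \<inter> B"
      unfolding sets_mu sets_restrict_space by auto
    have "T u = G \<inter> ((\<lambda>h. matrix_inv u ** h) -` B \<inter> space borel)"
    proof (intro equalityI subsetI)
      fix h assume "h \<in> T u"
      then obtain f where f: "f \<in> F" "h = u ** f" unfolding T_def by auto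
      have "matrix_inv u ** h = f" using f inv[OF uG] by (simp add: matrix_mul_assoc)
      thus "h \<in> G \<inter> ((\<lambda>h. matrix_inv u ** h) -` B \<inter> space borel)"
        using f B uG FG Gmul by auto
    next
      fix h assume h: "h \<in> G \<inter> ((\<lambda>h. matrix_inv u ** h) -` B \<inter> space borel)"
      have "matrix_inv u ** h \<in> F" using h B Gmul Ginv uG by auto
      moreover have "u ** (matrix_inv u ** h) = h" using inv[OF uG] by (simp add: matrix_mul_assoc)
      ultimately show "h \<in> T u" unfolding T_def by (metis image_eqI)
    qed
    moreover have "(\<lambda>h. matrix_inv u ** h) -` B \<inter> space borel \<in> sets borel"
      using measurable_sets_borel[OF lmult_borel B(1)] by simp
    ultimately show ?thesis unfolding sets_mu sets_restrict_space by auto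
  qed
  have TF: "emeasure \<mu> (T u) = emeasure \<mu> F" if "u \<in> G" for u
    unfolding T_def using haar[OF that Fmeas] .
  have Fne: "F \<noteq> {}" using A(5) by auto
  have Rge: "frob_norm f \<le> R" if "f \<in> F" for f
    unfolding A(8) using A(7) that by (intro cSup_upper) auto
  have R0: "0 \<le> R" using Fne Rge frob_nonneg order_trans by blast
  define e where "e u = ennreal (exp (- c * (frob_norm (a ** u))\<^sup>2))" for u :: "complex^'n^'n"
  define h where "h g = indicator (Bset G x (R * M)) g * ennreal (exp (- (c / R\<^sup>2) * (frob_norm (a ** g))\<^sup>2))" for g :: "complex^'n^'n"
  have key: "e u \<le> h g" if u: "u \<in> \<Gamma>" "frob_norm (x ** u) \<le> M" and g: "g \<in> T u" for u g
  proof -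
    obtain f where f: "f \<in> F" "g = u ** f" using g unfolding T_def by auto
    have gG: "g \<in> G" using f u GamG FG Gmul by auto
    have fR: "frob_norm f \<le> R" using Rge f by auto
    have "frob_norm (x ** g) = frob_norm ((x ** u) ** f)" using f by (simp add: matrix_mul_assoc)
    also have "\<dots> \<le> frob_norm (x ** u) * frob_norm f" by (rule frob_norm_mult)
    also have "\<dots> \<le> M * R" using u fR by (intro mult_mono) (auto simp: frob_nonneg A(11) less_imp_le)
    finally have "g \<in> Bset G x (R * M)" using gG by (simp add: Bset_def mult.commute)
    hence hg: "h g = ennreal (exp (- (c / R\<^sup>2) * (frob_norm (a ** g))\<^sup>2))" by (simp add: h_def)
    have "frob_norm (a ** g) = frob_norm ((a ** u) ** f)" using f by (simp add: matrix_mul_assoc)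
    also have "\<dots> \<le> frob_norm (a ** u) * frob_norm f" by (rule frob_norm_mult)
    also have "\<dots> \<le> frob_norm (a ** u) * R" using fR by (intro mult_left_mono) (auto simp: frob_nonneg)
    finally have ag: "frob_norm (a ** g) \<le> frob_norm (a ** u) * R" .
    have "(c / R\<^sup>2) * (frob_norm (a ** g))\<^sup>2 \<le> c * (frob_norm (a ** u))\<^sup>2"
    proof (cases "R = 0")
      case True thus ?thesis using A(10) by simp
    next
      case False
      have "(frob_norm (a ** g))\<^sup>2 \<le> (frob_norm (a ** u) * R)\<^sup>2"
        using ag by (intro power_mono) (auto simp: frob_nonneg)
      hence "(c / R\<^sup>2) * (frob_norm (a ** g))\<^sup>2 \<le> (c / R\<^sup>2) * (frob_norm (a ** u) * R)\<^sup>2"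
        using A(10) by (intro mult_left_mono) auto
      also have "\<dots> = c * (frob_norm (a ** u))\<^sup>2" using False by (simp add: power_mult_distrib)
      finally show ?thesis .
    qed
    hence "exp (- c * (frob_norm (a ** u))\<^sup>2) \<le> exp (- (c / R\<^sup>2) * (frob_norm (a ** g))\<^sup>2)" by simp
    thus ?thesis unfolding e_def hg by (rule ennreal_leI)
  qed
  define I where "I = (\<integral>\<^sup>+ g. h g \<partial>\<mu>)"
  have fin_bound: "(\<Sum>u\<in>S. e u) * emeasure \<mu> F \<le> I" if S: "finite S" "S \<subseteq> \<Gamma> \<inter> Bset G x M" for S
  proof -
    have SG: "\<And>u. u \<in> S \<Longrightarrow> u \<in> G" using S GamG by auto
    have "(\<Sum>u\<in>S. e u) * emeasure \<mu> F = (\<Sum>u\<in>S. e u * emeasure \<mu> (T u))"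
      by (simp add: sum_distrib_right TF SG)
    also have "\<dots> = (\<Sum>u\<in>S. \<integral>\<^sup>+ g. e u * indicator (T u) g \<partial>\<mu>)"
      by (intro sum.cong refl nn_integral_cmult_indicator[symmetric] Tmeas SG)
    also have "\<dots> = (\<integral>\<^sup>+ g. (\<Sum>u\<in>S. e u * indicator (T u) g) \<partial>\<mu>)"
      by (rule nn_integral_sum[symmetric]) (use Tmeas SG in measurable)
    also have "\<dots> \<le> I" unfolding I_def
    proof (rule nn_integral_mono)
      fix g
      show "(\<Sum>u\<in>S. e u * indicator (T u) g) \<le> h g"
      proof (cases "\<exists>u\<in>S. g \<in> T u")
        case True
        then obtain u where u: "u \<in> S" "g \<in> T u" by auto
        have "(\<Sum>v\<in>S. e v * indicator (T v) g) = (\<Sum>v\<in>S. if v = u then e u else 0)"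
        proof (rule sum.cong[OF refl])
          fix v assume v: "v \<in> S"
          show "e v * indicator (T v) g = (if v = u then e u else 0)"
          proof (cases "v = u")
            case True thus ?thesis using u by simp
          next
            case False
            have "g \<notin> T v" using disj[of u v] u v S False unfolding T_def by auto
            thus ?thesis using False by simp
          qed
        qed
        also have "\<dots> = e u" using u S by simp
        also have "\<dots> \<le> h g" using key[of u g] u S by (auto simp: Bset_def)
        finally show ?thesis .
      next
        case False
        hence "(\<Sum>u\<in>S. e u * indicator (T u) g) = 0" by (intro sum.neutral) auto
        thus ?thesis by simp
      qed
    qed
    finally show ?thesis .
  qed
  have "(\<integral>\<^sup>+ u. e u \<partial>count_space (\<Gamma> \<inter> Bset G x M)) \<le> I / emeasure \<mu> F"
  proof (rule nn_integral_count_space_le)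
    fix S assume "finite S" "S \<subseteq> \<Gamma> \<inter> Bset G x M"
    hence "(\<Sum>u\<in>S. e u) * emeasure \<mu> F / emeasure \<mu> F \<le> I / emeasure \<mu> F"
      by (intro divide_right_mono_ennreal fin_bound)
    thus "sum e S \<le> I / emeasure \<mu> F"
      using A(5,6) by (simp add: ennreal_mult_divide_eq)
  qed
  thus ?thesis unfolding e_def I_def h_def .
qed

end
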